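(* Let $U\subseteq V$, let $H=(U,E(U))$ be the induced subgraph with inherited weights, let $(L,R)$ be a partition of $V\setminus U$ into two (possibly empty) sets, and let $f\in\ell^2(V,w)$ satisfy $f(v)=0$ for $v\notin U$ and $\sum_{v\in U}w_H(v)f(v)^2>0$. Suppose that for every $t$ with $0<t\le\max_v|f(v)|$, $$\min\big(\gamma(L\cup L_f(t),R\cup R_f(t)),\ \gamma(L\cup R_f(t),R\cup L_f(t))\big)>\gamma(L,R).$$ Then $\sqrt{72\,\mathcal R^+_H(f)}\ge\mathcal R^+_G(f)$.
   Context: $G=(V,E,w)$ finite undirected, positive edge weights, $w(v)=\sum_{u\sim v}w(u,v)\ge1$. $E(U)$ is the set of edges with both endpoints in $U$; $w_H(v)=\sum_{u\in U,\{u,v\}\in E}w(u,v)$. $w(E(S))$ is the weight of edges inside $S$; $w(E(S,T))$ the weight of edges between disjoint $S,T$. For disjoint $L,R\subseteq V$, the uncutness is $\gamma(L,R)=w(E(L))+w(E(R))+w(E(L\cup R,V\setminus(L\cup R)))$. For $t>0$, $L_f(t)=\{v:f(v)\le-t\}$, $R_f(t)=\{v:f(v)\ge t\}$. $\mathcal R^+_G(f)=\sum_{\{u,v\}\in E}w(u,v)(f(u)+f(v))^2/\sum_{v\in V}w(v)f(v)^2$ and $\mathcal R^+_H(f)=\sum_{\{u,v\}\in E(U)}w(u,v)(f(u)+f(v))^2/\sum_{v\in U}w_H(v)f(v)^2$. *)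

theory Defs
  imports Complex_Main
begin

definition wgraph :: "'a set \<Rightarrow> 'a set set \<Rightarrow> ('a set \<Rightarrow> real) \<Rightarrow> bool" where
  "wgraph V E w \<longleftrightarrow> finite V \<and>
     (\<forall>e\<in>E. \<exists>u v. u \<in> V \<and> v \<in> V \<and> u \<noteq> v \<and> e = {u, v}) \<and>
     (\<forall>e\<in>E. w e > 0)"

definition wdeg :: "'a set set \<Rightarrow> ('a set \<Rightarrow> real) \<Rightarrow> 'a \<Rightarrow> real" where
  "wdeg F w v = (\<Sum>e\<in>{e\<in>F. v \<in> e}. w e)"

definition edges_in :: "'a set set \<Rightarrow> 'a set \<Rightarrow> 'a set set" where
  "edges_in E S = {e\<in>E. e \<subseteq> S}"

definition edges_betw :: "'a set set \<Rightarrow> 'a set \<Rightarrow> 'a set \<Rightarrow> 'a set set" where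
  "edges_betw E S T = {e\<in>E. e \<inter> S \<noteq> {} \<and> e \<inter> T \<noteq> {}}"

definition wsum :: "('a set \<Rightarrow> real) \<Rightarrow> 'a set set \<Rightarrow> real" where
  "wsum w F = (\<Sum>e\<in>F. w e)"

definition uncut :: "'a set \<Rightarrow> 'a set set \<Rightarrow> ('a set \<Rightarrow> real) \<Rightarrow> 'a set \<Rightarrow> 'a set \<Rightarrow> real" where
  "uncut V E w L R = wsum w (edges_in E L) + wsum w (edges_in E R)
     + wsum w (edges_betw E (L \<union> R) (V - (L \<union> R)))"

definition Lset :: "'a set \<Rightarrow> ('a \<Rightarrow> real) \<Rightarrow> real \<Rightarrow> 'a set" where
  "Lset V f t = {v\<in>V. f v \<le> - t}"

definition Rset :: "'a set \<Rightarrow> ('a \<Rightarrow> real) \<Rightarrow> real \<Rightarrow> 'a set" where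
  "Rset V f t = {v\<in>V. f v \<ge> t}"

text \<open>Signless Rayleigh quotient of f on the graph with vertex set S and edge set F
  (edge weights w). For an edge e = {u,v}, the sum of f over e is f u + f v.\<close>
definition rayleigh_plus :: "'a set \<Rightarrow> 'a set set \<Rightarrow> ('a set \<Rightarrow> real) \<Rightarrow> ('a \<Rightarrow> real) \<Rightarrow> real" where
  "rayleigh_plus S F w f =
     (\<Sum>e\<in>F. w e * (\<Sum>x\<in>e. f x)\<^sup>2) / (\<Sum>v\<in>S. wdeg F w v * (f v)\<^sup>2)"

end

theory Submission imports Defs "HOL-Analysis.Analysis" begin
definition ind :: "bool \<Rightarrow> real" where "ind P = (if P then 1 else 0)"

lemma step_int:
  assumes "0 \<le> c" "c \<le> M"
  shows "((\<lambda>t::real. 2*t * ind (t \<le> c)) has_integral c^2) {0..M}"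
proof -
  have "((\<lambda>t::real. 2*t) has_integral (c^2 - 0^2)) {0..c}"
    by (rule fundamental_theorem_of_calculus[where f="\<lambda>t. t^2"])
       (use assms in \<open>auto intro!: derivative_eq_intros simp: has_real_derivative_iff_has_vector_derivative[symmetric]\<close>)
  then have "((\<lambda>t::real. if t \<in> cbox 0 c then 2*t else 0) has_integral c^2) (cbox 0 M)"
    by (intro has_integral_restrict_closed_subinterval) (use assms in auto)
  then have "((\<lambda>t::real. if t \<in> {0..c} then 2*t else 0) has_integral c^2) {0..M}"
    by (simp only: cbox_interval)
  then show ?thesis
    by (rule has_integral_eq[rotated]) (auto simp: ind_def)
qed

lemma fam_int:
  fixes \<alpha> c :: "'b \<Rightarrow> real"
  assumes "finite I" "\<forall>i\<in>I. 0 \<le> c i \<and> c i \<le> M"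
  shows "((\<lambda>t. 2*t*(\<Sum>i\<in>I. \<alpha> i * ind (t \<le> c i))) has_integral (\<Sum>i\<in>I. \<alpha> i * (c i)^2)) {0..M}"
proof -
  have "((\<lambda>t. \<Sum>i\<in>I. \<alpha> i * (2*t * ind (t \<le> c i))) has_integral (\<Sum>i\<in>I. \<alpha> i * (c i)^2)) {0..M}"
    using assms by (intro has_integral_sum has_integral_mult_right step_int) auto
  then show ?thesis
    by (simp add: sum_distrib_left algebra_simps)
qed
definition unc :: "'a set \<Rightarrow> 'a set \<Rightarrow> 'a set \<Rightarrow> 'a set \<Rightarrow> real" where
  "unc V L R e = ind (e \<subseteq> L) + ind (e \<subseteq> R) + ind (e \<inter> (L \<union> R) \<noteq> {} \<and> e \<inter> (V - (L \<union> R)) \<noteq> {})"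

lemma comb:
  assumes "x \<noteq> y" "x \<in> V" "y \<in> V" "L \<inter> R = {}" "L \<union> R = V - U" "A \<subseteq> U" "B \<subseteq> U" "A \<inter> B = {}" "U \<subseteq> V"
  shows "unc V (L\<union>A) (R\<union>B) {x,y} + unc V (L\<union>B) (R\<union>A) {x,y} - 2*unc V L R {x,y}
    \<le> 2*(if {x,y}\<subseteq>U then ind({x,y}\<subseteq>A)+ind({x,y}\<subseteq>B)+ind({x,y}\<inter>(A\<union>B)\<noteq>{} \<and> {x,y}\<inter>(U-(A\<union>B))\<noteq>{}) else 0)
       - (if \<not>{x,y}\<subseteq>U \<and> \<not>{x,y}\<subseteq>V-U then ind({x,y}\<inter>(A\<union>B)\<noteq>{}) else 0)"
  using assms
  by (cases "x\<in>U"; cases "y\<in>U"; cases "x\<in>A"; cases "y\<in>A"; cases "x\<in>B"; cases "y\<in>B"; cases "x\<in>L"; cases "y\<in>L")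
     (auto simp: unc_def ind_def)

lemma thr_H:
  fixes f :: "'a \<Rightarrow> real"
  assumes "x \<in> V" "y \<in> V" "t > 0" "A = {v\<in>V. f v \<le> -t}" "B = {v\<in>V. f v \<ge> t}"
  shows "ind({x,y}\<subseteq>A)+ind({x,y}\<subseteq>B)+ind({x,y}\<inter>(A\<union>B)\<noteq>{} \<and> {x,y}\<inter>(U-(A\<union>B))\<noteq>{})
    \<le> ind (t \<le> max \<bar>f x\<bar> \<bar>f y\<bar>) - ind (t \<le> (if f x * f y < 0 then min \<bar>f x\<bar> \<bar>f y\<bar> else 0))"
  using assms
  by (cases "f x \<le> -t"; cases "f y \<le> -t"; cases "f x \<ge> t"; cases "f y \<ge> t"; cases "f x * f y < 0")
     (auto simp: ind_def abs_if mult_less_0_iff split: if_splits)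

lemma thr_X:
  fixes f :: "'a \<Rightarrow> real"
  assumes "x \<in> V" "y \<in> V" "t > 0" "A = {v\<in>V. f v \<le> -t}" "B = {v\<in>V. f v \<ge> t}"
  shows "ind({x,y}\<inter>(A\<union>B)\<noteq>{}) = ind (t \<le> max \<bar>f x\<bar> \<bar>f y\<bar>)"
  using assms by (auto simp: ind_def abs_if)

lemma if_mult0: "(if P then (a::real) else 0) * b = (if P then a*b else 0)" by simp

lemma swap_sum:
  fixes g :: "'a \<Rightarrow> real"
  assumes "finite U" "finite F" "\<forall>e\<in>F. e \<subseteq> U"
  shows "(\<Sum>v\<in>U. wdeg F w v * g v) = (\<Sum>e\<in>F. w e * (\<Sum>v\<in>e. g v))"
proof -
  have "(\<Sum>v\<in>U. wdeg F w v * g v) = (\<Sum>v\<in>U. \<Sum>e\<in>F. if v \<in> e then w e * g v else 0)"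
    unfolding wdeg_def using assms
    by (intro sum.cong refl) (simp add: sum_distrib_right sum.inter_filter if_mult0)
  also have "\<dots> = (\<Sum>e\<in>F. \<Sum>v\<in>U. if v \<in> e then w e * g v else 0)"
    by (rule sum.swap)
  also have "\<dots> = (\<Sum>e\<in>F. w e * (\<Sum>v\<in>e. g v))"
  proof (intro sum.cong refl)
    fix e assume "e \<in> F"
    then have "e \<subseteq> U" using assms by auto
    then have "{v\<in>U. v\<in>e} = e" by auto
    then show "(\<Sum>v\<in>U. if v \<in> e then w e * g v else 0) = w e * (\<Sum>v\<in>e. g v)"
      using assms(1) by (simp add: sum.inter_filter[symmetric] sum_distrib_left)
  qed
  finally show ?thesis .
qed

lemma mult_ind: "(a::real) * (if P then 1 else 0) = (if P then a else 0)" by simp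

lemma uncut_sum:
  assumes "finite E"
  shows "uncut V E w L R = (\<Sum>e\<in>E. w e * unc V L R e)"
  unfolding uncut_def wsum_def edges_in_def edges_betw_def unc_def ind_def
  using assms by (simp add: sum.inter_filter distrib_left sum.distrib mult_ind)

lemma ab1: "0 \<le> (a::real) \<Longrightarrow> 0 \<le> b \<Longrightarrow> (max a b)^2 \<le> (a+b)*(a+b)"
  by (auto simp: max_def power2_eq_square intro: mult_mono)
lemma ab2: "0 \<le> (a::real) \<Longrightarrow> 0 \<le> b \<Longrightarrow> (max a b)^2 - (min a b)^2 = \<bar>a-b\<bar>*(a+b)"
  by (auto simp: max_def min_def power2_eq_square algebra_simps abs_if)
lemma pair_bound:
  fixes p q :: real
  shows "(max \<bar>p\<bar> \<bar>q\<bar>)^2 - (if p * q < 0 then min \<bar>p\<bar> \<bar>q\<bar> else 0)^2 \<le> \<bar>p+q\<bar> * (\<bar>p\<bar>+\<bar>q\<bar>)"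
proof (cases "p * q < 0")
  case True
  then have "\<bar>p+q\<bar> = \<bar>\<bar>p\<bar> - \<bar>q\<bar>\<bar>" by (auto simp: mult_less_0_iff)
  then show ?thesis using True ab2[of "\<bar>p\<bar>" "\<bar>q\<bar>"] by simp
next
  case False
  then have "\<bar>p+q\<bar> = \<bar>p\<bar> + \<bar>q\<bar>" by (auto simp: mult_less_0_iff not_less abs_if)
  then show ?thesis using False ab1[of "\<bar>p\<bar>" "\<bar>q\<bar>"] by simp
qed

lemma final_alg:
  fixes N D X :: real
  assumes "D > 0" "X \<ge> 0" "N \<ge> 0" "N \<le> 2*D" "X^2 \<le> 8*N*D"
  shows "(N+X)/(D+X) \<le> sqrt (72 * (N/D))"
proof (rule real_le_rsqrt)
  have "(N+X)/(D+X) \<le> (N+X)/D" using assms by (intro divide_left_mono) auto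
  moreover have "0 \<le> (N+X)/(D+X)" using assms by auto
  ultimately have "((N+X)/(D+X))^2 \<le> ((N+X)/D)^2" by (intro power_mono) auto
  also have "\<dots> = (N+X)^2 / D^2" by (simp add: power_divide)
  also have "\<dots> \<le> 72 * N * D / D^2"
  proof (rule divide_right_mono)
    have "0 \<le> (N-X)^2" by simp
    then have "(N+X)^2 \<le> 2*N^2 + 2*X^2" by (simp add: power2_eq_square algebra_simps)
    also have "\<dots> \<le> 72*N*D"
    proof -
      have "N*N \<le> N*(2*D)" using assms by (intro mult_left_mono) auto
      moreover have "0 \<le> N*D" using assms by simp
      ultimately show ?thesis using assms(5) by (simp add: power2_eq_square)
    qed
    finally show "(N+X)^2 \<le> 72*N*D" .
  qed auto
  also have "\<dots> = 72 * (N/D)" using assms by (simp add: power2_eq_square)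
  finally show "((N+X)/(D+X))^2 \<le> 72 * (N/D)" .
qed

theorem mainTheorem14:
  fixes V U L R :: "'a set" and E :: "'a set set" and w :: "'a set \<Rightarrow> real"
    and f :: "'a \<Rightarrow> real"
  assumes G: "wgraph V E w"
    and deg: "\<forall>v\<in>V. wdeg E w v \<ge> 1"
    and UV: "U \<subseteq> V"
    and LR: "L \<union> R = V - U" "L \<inter> R = {}"
    and f0: "\<forall>v\<in>V - U. f v = 0"
    and fpos: "(\<Sum>v\<in>U. wdeg (edges_in E U) w v * (f v)\<^sup>2) > 0"
    and cond: "\<forall>t. 0 < t \<and> t \<le> Max ((\<lambda>v. \<bar>f v\<bar>) ` V) \<longrightarrow>
        min (uncut V E w (L \<union> Lset V f t) (R \<union> Rset V f t))
            (uncut V E w (L \<union> Rset V f t) (R \<union> Lset V f t)) > uncut V E w L R"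
  shows "sqrt (72 * rayleigh_plus U (edges_in E U) w f) \<ge> rayleigh_plus V E w f"
proof -
  have finV: "finite V" and Eok: "\<forall>e\<in>E. \<exists>u v. u \<in> V \<and> v \<in> V \<and> u \<noteq> v \<and> e = {u, v}"
    and wpos: "\<forall>e\<in>E. w e > 0" using G by (auto simp: wgraph_def)
  have Eobt: "\<exists>u v. u \<noteq> v \<and> e = {u,v} \<and> u \<in> V \<and> v \<in> V" if "e \<in> E" for e
    using bspec[OF Eok that] by (elim exE conjE) (intro exI conjI, assumption+)
  have EV: "\<forall>e\<in>E. e \<subseteq> V" using Eok by fastforce
  then have "E \<subseteq> Pow V" by auto
  then have finE: "finite E" by (rule finite_subset) (simp add: finV)
  have finU: "finite U" using UV finV by (rule finite_subset)
  define EU where "EU = edges_in E U"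
  define EC where "EC = {e\<in>E. \<not> e \<subseteq> U \<and> \<not> e \<subseteq> V - U}"
  define s where "s e = (\<Sum>x\<in>e. f x)" for e
  define q where "q e = (\<Sum>x\<in>e. (f x)^2)" for e
  define a where "a e = (\<Sum>x\<in>e. \<bar>f x\<bar>)" for e
  define hi where "hi e = Max ((\<lambda>v. \<bar>f v\<bar>) ` e)" for e
  define lo where "lo e = (if \<exists>x\<in>e. \<exists>y\<in>e. f x * f y < 0 then Min ((\<lambda>v. \<bar>f v\<bar>) ` e) else 0)" for e
  define N where "N = (\<Sum>e\<in>EU. w e * (s e)^2)"
  define D where "D = (\<Sum>e\<in>EU. w e * q e)"
  define X where "X = (\<Sum>e\<in>EC. w e * q e)"
  define M where "M = Max ((\<lambda>v. \<bar>f v\<bar>) ` V)"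
  have pair: "s {x,y} = f x + f y \<and> q {x,y} = (f x)^2 + (f y)^2 \<and> a {x,y} = \<bar>f x\<bar> + \<bar>f y\<bar>
     \<and> hi {x,y} = max \<bar>f x\<bar> \<bar>f y\<bar> \<and> lo {x,y} = (if f x * f y < 0 then min \<bar>f x\<bar> \<bar>f y\<bar> else 0)"
    if "x \<noteq> y" for x y
  proof -
    have "(\<exists>x'\<in>{x,y}. \<exists>y'\<in>{x,y}. f x' * f y' < 0) \<longleftrightarrow> f x * f y < 0"
      by (auto simp: mult.commute not_square_less_zero)
    then show ?thesis using that by (simp add: s_def q_def a_def hi_def lo_def)
  qed
  have EUsub: "EU \<subseteq> E" "\<forall>e\<in>EU. e \<subseteq> U" by (auto simp: EU_def edges_in_def)
  have ECsub: "EC \<subseteq> E" by (auto simp: EC_def)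
  have finEU: "finite EU" using EUsub(1) finE by (rule finite_subset)
  have finEC: "finite EC" using ECsub finE by (rule finite_subset)
  have restr: "(\<Sum>e\<in>E. if e \<in> F then g e else 0) = sum g F" if "F \<subseteq> E" for F and g :: "'a set \<Rightarrow> real"
    using that finE by (simp add: sum.inter_restrict[symmetric] Int_absorb1 inf.absorb2)
  have split: "(\<Sum>e\<in>E. g e) = (\<Sum>e\<in>EU. g e) + (\<Sum>e\<in>EC. g e)"
    if g0: "\<And>e. e \<in> E \<Longrightarrow> e \<subseteq> V - U \<Longrightarrow> g e = 0" for g :: "'a set \<Rightarrow> real"
  proof -
    have "(\<Sum>e\<in>E. g e) = (\<Sum>e\<in>E. (if e \<in> EU then g e else 0) + (if e \<in> EC then g e else 0))"
    proof (intro sum.cong refl)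
      fix e assume e: "e \<in> E"
      obtain u v where "u \<noteq> v" "e = {u,v}" "u \<in> V" "v \<in> V" using Eobt[OF e] by auto
      then have ne: "e \<noteq> {}" by auto
      show "g e = (if e \<in> EU then g e else 0) + (if e \<in> EC then g e else 0)"
        using e ne g0[OF e] by (auto simp: EU_def EC_def edges_in_def)
    qed
    also have "\<dots> = (\<Sum>e\<in>EU. g e) + (\<Sum>e\<in>EC. g e)"
      using EUsub ECsub by (simp add: sum.distrib restr)
    finally show ?thesis .
  qed
  have zeroS: "w e * q e = 0 \<and> w e * (s e)^2 = 0" if eE: "e \<in> E" and eS: "e \<subseteq> V - U" for e
  proof -
    obtain u v where "u \<noteq> v" "e = {u,v}" "u \<in> V" "v \<in> V" using Eobt[OF eE] by auto
    then show ?thesis using eS f0 pair by auto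
  qed
  have cross: "q e = (s e)^2 \<and> q e = (hi e)^2" if eC: "e \<in> EC" for e
  proof -
    obtain u v where uv: "u \<noteq> v" "e = {u,v}" "u \<in> V" "v \<in> V" using Eobt[OF subsetD[OF ECsub eC]] by auto
    then have "f u = 0 \<or> f v = 0" using eC f0 by (auto simp: EC_def)
    then show ?thesis using pair[OF uv(1)] uv by (auto simp: power2_eq_square max_def)
  qed
  have DH: "(\<Sum>v\<in>U. wdeg (edges_in E U) w v * (f v)\<^sup>2) = D"
    unfolding D_def q_def EU_def[symmetric] using finU finEU EUsub by (intro swap_sum) auto
  have DG: "(\<Sum>v\<in>V. wdeg E w v * (f v)\<^sup>2) = D + X"
  proof -
    have "(\<Sum>v\<in>V. wdeg E w v * (f v)\<^sup>2) = (\<Sum>e\<in>E. w e * q e)"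
      unfolding q_def using finV finE EV by (intro swap_sum) auto
    also have "\<dots> = D + X" unfolding D_def X_def using zeroS by (intro split) auto
    finally show ?thesis .
  qed
  have NG: "(\<Sum>e\<in>E. w e * (\<Sum>x\<in>e. f x)\<^sup>2) = N + X"
  proof -
    have "(\<Sum>e\<in>E. w e * (\<Sum>x\<in>e. f x)\<^sup>2) = (\<Sum>e\<in>E. w e * (s e)^2)" by (simp add: s_def)
    also have "\<dots> = N + (\<Sum>e\<in>EC. w e * (s e)^2)" unfolding N_def using zeroS by (intro split) auto
    also have "(\<Sum>e\<in>EC. w e * (s e)^2) = X" unfolding X_def using cross by (intro sum.cong) auto
    finally show ?thesis .
  qed
  have Dpos: "D > 0" using fpos DH by simp
  have wEU: "\<forall>e\<in>EU. w e > 0" using wpos EUsub by auto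
  have Xnn: "X \<ge> 0" unfolding X_def q_def using wpos ECsub by (intro sum_nonneg mult_nonneg_nonneg sum_nonneg) (auto intro: less_imp_le)
  have Nnn: "N \<ge> 0" unfolding N_def using wEU by (intro sum_nonneg) auto
  have edgeEU: "\<exists>u v. u \<noteq> v \<and> e = {u,v} \<and> u \<in> V \<and> v \<in> V" if eU: "e \<in> EU" for e
    using Eobt[OF subsetD[OF EUsub(1) eU]] by auto
  have N2D: "N \<le> 2*D"
  proof -
    have "N \<le> (\<Sum>e\<in>EU. 2 * (w e * q e))" unfolding N_def
    proof (intro sum_mono)
      fix e assume e: "e \<in> EU"
      then obtain u v where uv: "u \<noteq> v" "e = {u,v}" using edgeEU[of e] by auto
      have "0 \<le> (f u - f v)^2" by simp
      then have "(s e)^2 \<le> 2 * q e" using pair[OF uv(1)] uv by (simp add: power2_eq_square algebra_simps)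
      then show "w e * (s e)^2 \<le> 2 * (w e * q e)" using wEU e by (simp add: mult_left_mono)
    qed
    then show ?thesis by (simp add: D_def sum_distrib_left)
  qed
  have hiM: "0 \<le> lo e \<and> lo e \<le> M \<and> 0 \<le> hi e \<and> hi e \<le> M" if eE: "e \<in> E" for e
  proof -
    obtain u v where uv: "u \<noteq> v" "e = {u,v}" "u \<in> V" "v \<in> V" using Eobt[OF eE] by auto
    have "\<bar>f u\<bar> \<le> M" "\<bar>f v\<bar> \<le> M" unfolding M_def using finV uv by auto
    moreover have "hi e = max \<bar>f u\<bar> \<bar>f v\<bar>" "lo e = (if f u * f v < 0 then min \<bar>f u\<bar> \<bar>f v\<bar> else 0)"
      using pair[OF uv(1)] uv(2) by simp_all
    moreover have "0 \<le> max \<bar>f u\<bar> \<bar>f v\<bar>" by (simp add: le_max_iff_disj)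
    moreover have "0 \<le> M" using \<open>\<bar>f u\<bar> \<le> M\<close> by linarith
    ultimately show ?thesis by (simp add: min_le_iff_disj)
  qed
  have pt: "0 \<le> (\<Sum>e\<in>EU. (2 * w e) * ind (t \<le> hi e)) + (\<Sum>e\<in>EU. (-2 * w e) * ind (t \<le> lo e))
      + (\<Sum>e\<in>EC. (- w e) * ind (t \<le> hi e))" if t: "0 < t" "t \<le> M" for t
  proof -
    define A where "A = Lset V f t"
    define B where "B = Rset V f t"
    have AU: "A \<subseteq> U" using f0 t unfolding A_def Lset_def by force
    have BU: "B \<subseteq> U" using f0 t unfolding B_def Rset_def by force
    have AB: "A \<inter> B = {}" using t unfolding A_def B_def Lset_def Rset_def by auto
    have c: "uncut V E w (L \<union> A) (R \<union> B) > uncut V E w L R" "uncut V E w (L \<union> B) (R \<union> A) > uncut V E w L R"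
      using cond t unfolding A_def B_def M_def by auto
    have "0 < (\<Sum>e\<in>E. w e * (unc V (L\<union>A) (R\<union>B) e + unc V (L\<union>B) (R\<union>A) e - 2 * unc V L R e))"
    proof -
      have "(\<Sum>e\<in>E. w e * (unc V (L\<union>A) (R\<union>B) e + unc V (L\<union>B) (R\<union>A) e - 2 * unc V L R e))
        = (\<Sum>e\<in>E. w e * unc V (L\<union>A) (R\<union>B) e) + (\<Sum>e\<in>E. w e * unc V (L\<union>B) (R\<union>A) e)
          - 2 * (\<Sum>e\<in>E. w e * unc V L R e)"
        by (simp add: sum.distrib sum_subtractf sum_distrib_left algebra_simps)
      then show ?thesis using c finE by (simp add: uncut_sum)
    qed
    also have "\<dots> \<le> (\<Sum>e\<in>E. (if e \<in> EU then (2 * w e) * ind (t \<le> hi e) + (-2 * w e) * ind (t \<le> lo e) else 0)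
        + (if e \<in> EC then (- w e) * ind (t \<le> hi e) else 0))"
    proof (intro sum_mono)
      fix e assume e: "e \<in> E"
      obtain x y where xy: "x \<noteq> y" "e = {x,y}" "x \<in> V" "y \<in> V" using Eobt[OF e] by auto
      have cb: "unc V (L\<union>A) (R\<union>B) e + unc V (L\<union>B) (R\<union>A) e - 2 * unc V L R e
        \<le> 2*(if {x,y}\<subseteq>U then ind({x,y}\<subseteq>A)+ind({x,y}\<subseteq>B)+ind({x,y}\<inter>(A\<union>B)\<noteq>{} \<and> {x,y}\<inter>(U-(A\<union>B))\<noteq>{}) else 0)
       - (if \<not>{x,y}\<subseteq>U \<and> \<not>{x,y}\<subseteq>V-U then ind({x,y}\<inter>(A\<union>B)\<noteq>{}) else 0)"
        using comb[OF xy(1,3,4) LR(2) LR(1) AU BU AB UV] xy(2) by simp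
      have tH: "ind({x,y}\<subseteq>A)+ind({x,y}\<subseteq>B)+ind({x,y}\<inter>(A\<union>B)\<noteq>{} \<and> {x,y}\<inter>(U-(A\<union>B))\<noteq>{})
         \<le> ind (t \<le> hi e) - ind (t \<le> lo e)"
        using thr_H[OF xy(3,4) t(1), of A f B U] pair[OF xy(1)] xy(2)
        unfolding A_def B_def Lset_def Rset_def by simp
      have tX: "ind({x,y}\<inter>(A\<union>B)\<noteq>{}) = ind (t \<le> hi e)"
        using thr_X[OF xy(3,4) t(1), of A f B] pair[OF xy(1)] xy(2)
        unfolding A_def B_def Lset_def Rset_def by simp
      have "unc V (L\<union>A) (R\<union>B) e + unc V (L\<union>B) (R\<union>A) e - 2 * unc V L R e
        \<le> (if e \<in> EU then 2 * (ind (t \<le> hi e) - ind (t \<le> lo e)) else 0)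
          - (if e \<in> EC then ind (t \<le> hi e) else 0)"
        using cb tH tX e xy(2) by (auto simp: EU_def EC_def edges_in_def)
      then have "w e * (unc V (L\<union>A) (R\<union>B) e + unc V (L\<union>B) (R\<union>A) e - 2 * unc V L R e)
        \<le> w e * ((if e \<in> EU then 2 * (ind (t \<le> hi e) - ind (t \<le> lo e)) else 0)
          - (if e \<in> EC then ind (t \<le> hi e) else 0))"
        using wpos e by (intro mult_left_mono) auto
      then show "w e * (unc V (L\<union>A) (R\<union>B) e + unc V (L\<union>B) (R\<union>A) e - 2 * unc V L R e)
        \<le> (if e \<in> EU then (2 * w e) * ind (t \<le> hi e) + (-2 * w e) * ind (t \<le> lo e) else 0)
        + (if e \<in> EC then (- w e) * ind (t \<le> hi e) else 0)"
        by (simp add: algebra_simps split: if_splits)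
    qed
    also have "\<dots> = (\<Sum>e\<in>EU. (2 * w e) * ind (t \<le> hi e)) + (\<Sum>e\<in>EU. (-2 * w e) * ind (t \<le> lo e))
      + (\<Sum>e\<in>EC. (- w e) * ind (t \<le> hi e))"
      by (simp only: sum.distrib restr[OF EUsub(1)] restr[OF ECsub])
    finally show ?thesis by simp
  qed
  have I1: "((\<lambda>t. 2*t*(\<Sum>e\<in>EU. (2 * w e) * ind (t \<le> hi e))) has_integral (\<Sum>e\<in>EU. (2 * w e) * (hi e)^2)) {0..M}"
    using finEU hiM EUsub by (intro fam_int) auto
  have I2: "((\<lambda>t. 2*t*(\<Sum>e\<in>EU. (-2 * w e) * ind (t \<le> lo e))) has_integral (\<Sum>e\<in>EU. (-2 * w e) * (lo e)^2)) {0..M}"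
    using finEU hiM EUsub by (intro fam_int) auto
  have I3: "((\<lambda>t. 2*t*(\<Sum>e\<in>EC. (- w e) * ind (t \<le> hi e))) has_integral (\<Sum>e\<in>EC. (- w e) * (hi e)^2)) {0..M}"
    using finEC hiM ECsub by (intro fam_int) auto
  have INT: "0 \<le> (\<Sum>e\<in>EU. (2 * w e) * (hi e)^2) + (\<Sum>e\<in>EU. (-2 * w e) * (lo e)^2) + (\<Sum>e\<in>EC. (- w e) * (hi e)^2)"
  proof (rule has_integral_nonneg[OF has_integral_add[OF has_integral_add[OF I1 I2] I3]])
    fix t assume "t \<in> {0..M}"
    then consider "t = 0" | "0 < t" "t \<le> M" by fastforce
    then show "0 \<le> 2*t*(\<Sum>e\<in>EU. (2 * w e) * ind (t \<le> hi e)) + 2*t*(\<Sum>e\<in>EU. (-2 * w e) * ind (t \<le> lo e))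
      + 2*t*(\<Sum>e\<in>EC. (- w e) * ind (t \<le> hi e))"
    proof cases
      case 2
      then have "0 \<le> 2*t*((\<Sum>e\<in>EU. (2 * w e) * ind (t \<le> hi e)) + (\<Sum>e\<in>EU. (-2 * w e) * ind (t \<le> lo e))
      + (\<Sum>e\<in>EC. (- w e) * ind (t \<le> hi e)))" using pt[OF 2] by simp
      then show ?thesis by (simp add: algebra_simps)
    qed simp
  qed
  have XT1: "X \<le> 2 * (\<Sum>e\<in>EU. w e * ((hi e)^2 - (lo e)^2))"
  proof -
    have XH: "X = (\<Sum>e\<in>EC. w e * (hi e)^2)" unfolding X_def
    proof (intro sum.cong refl)
      fix e assume "e \<in> EC"
      then show "w e * q e = w e * (hi e)^2" by (simp only: cross[OF \<open>e \<in> EC\<close>, THEN conjunct2])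
    qed
    show ?thesis using INT unfolding XH
      by (simp add: sum_distrib_left sum_negf algebra_simps sum_subtractf)
  qed
  define T where "T = (\<Sum>e\<in>EU. w e * (\<bar>s e\<bar> * a e))"
  have XT: "X \<le> 2 * T"
  proof -
    have "(\<Sum>e\<in>EU. w e * ((hi e)^2 - (lo e)^2)) \<le> T" unfolding T_def
    proof (intro sum_mono)
      fix e assume e: "e \<in> EU"
      then obtain u v where uv: "u \<noteq> v" "e = {u,v}" using edgeEU[of e] by auto
      have "(hi e)^2 - (lo e)^2 \<le> \<bar>s e\<bar> * a e"
        using pair_bound[of "f u" "f v"] pair[OF uv(1)] uv by simp
      then show "w e * ((hi e)^2 - (lo e)^2) \<le> w e * (\<bar>s e\<bar> * a e)" using wEU e by (simp add: mult_left_mono)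
    qed
    then show ?thesis using XT1 by simp
  qed
  have wEU0: "\<forall>e\<in>EU. 0 \<le> w e" using wEU by (auto intro: less_imp_le)
  have CS: "T^2 \<le> N * (\<Sum>e\<in>EU. w e * (a e)^2)"
  proof -
    have "T = (\<Sum>e\<in>EU. (sqrt (w e) * \<bar>s e\<bar>) * (sqrt (w e) * a e))" unfolding T_def
      by (intro sum.cong refl) (simp add: algebra_simps abs_of_pos wEU)
    moreover have "N = (\<Sum>e\<in>EU. (sqrt (w e) * \<bar>s e\<bar>)^2)" unfolding N_def
      by (intro sum.cong refl) (simp add: power_mult_distrib abs_of_pos wEU0)
    moreover have "(\<Sum>e\<in>EU. w e * (a e)^2) = (\<Sum>e\<in>EU. (sqrt (w e) * a e)^2)"
      by (intro sum.cong refl) (simp add: power_mult_distrib abs_of_pos wEU0)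
    ultimately show ?thesis using Cauchy_Schwarz_ineq_sum by metis
  qed
  have A2: "(\<Sum>e\<in>EU. w e * (a e)^2) \<le> 2 * D"
  proof -
    have "(\<Sum>e\<in>EU. w e * (a e)^2) \<le> (\<Sum>e\<in>EU. 2 * (w e * q e))"
    proof (intro sum_mono)
      fix e assume e: "e \<in> EU"
      then obtain u v where uv: "u \<noteq> v" "e = {u,v}" using edgeEU[of e] by auto
      have "0 \<le> (\<bar>f u\<bar> - \<bar>f v\<bar>)^2" by simp
      then have "(a e)^2 \<le> 2 * q e" using pair[OF uv(1)] uv by (simp add: power2_eq_square algebra_simps)
      then show "w e * (a e)^2 \<le> 2 * (w e * q e)" using wEU e by (simp add: mult_left_mono)
    qed
    then show ?thesis by (simp add: D_def sum_distrib_left)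
  qed
  have X2: "X^2 \<le> 8 * N * D"
  proof -
    have "X^2 \<le> (2*T)^2" using XT Xnn by (intro power_mono) auto
    also have "\<dots> = 4 * T^2" by (simp add: power2_eq_square)
    also have "\<dots> \<le> 4 * (N * (2*D))"
    proof -
      have "N * (\<Sum>e\<in>EU. w e * (a e)^2) \<le> N * (2*D)" using A2 Nnn by (rule mult_left_mono)
      then show ?thesis using CS by linarith
    qed
    finally show ?thesis by simp
  qed
  have "rayleigh_plus V E w f = (N+X)/(D+X)" unfolding rayleigh_plus_def using NG DG by simp
  moreover have "rayleigh_plus U (edges_in E U) w f = N/D"
    unfolding rayleigh_plus_def using DH by (simp add: N_def s_def EU_def)
  ultimately show ?thesis using final_alg[OF Dpos Xnn Nnn N2D X2] by simp
qed
end
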